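(* Let $(X,\|\cdot\|)$ be an extended Banach space and let $\tau_F$ be its finest locally convex topology. Then $(X,\tau_F)$ is barreled, i.e. every absolutely convex, absorbing subset of $X$ that is closed in $(X,\tau_F)$ is a neighborhood of $0_X$ in $(X,\tau_F)$.
   Context: An extended norm on a vector space $X$ over $\mathbb{R}$ or $\mathbb{C}$ is a map $\|\cdot\|:X\to[0,\infty]$ with $\|x\|=0$ iff $x=0_X$, $\|\alpha x\|=|\alpha|\|x\|$, and $\|x+y\|\le\|x\|+\|y\|$; $X$ carries the topology with basic neighborhoods $\{y:\|y-x\|<\varepsilon\}$. $(X,\|\cdot\|)$ is an extended Banach space if every Cauchy sequence (w.r.t. the extended metric $\|x-y\|$) converges. A locally convex topology on $X$ is one induced by a family of finite-valued seminorms. The finest locally convex topology $\tau_F$ is the locally convex topology coarser than the extended norm topology such that every locally convex topology coarser than the extended norm topology is coarser than $\tau_F$. *)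

theory Defs
  imports "HOL-Analysis.Analysis"
begin

text \<open>Everything is parameterised by the scalar multiplication \<open>sc\<close> of a vector space
  over a scalar field \<open>'k\<close> (instantiated with \<open>scaleR\<close> for real and \<open>scaleC\<close> for
  complex vector spaces); \<open>norm\<close> on \<open>'k\<close> is the absolute value.\<close>

definition ext_norm :: "('k::real_normed_field \<Rightarrow> 'v::ab_group_add \<Rightarrow> 'v) \<Rightarrow> ('v \<Rightarrow> ennreal) \<Rightarrow> bool" where
  "ext_norm sc N \<longleftrightarrow>
     (\<forall>x. N x = 0 \<longleftrightarrow> x = 0) \<and>
     (\<forall>a x. N (sc a x) = ennreal (norm a) * N x) \<and>
     (\<forall>x y. N (x + y) \<le> N x + N y)"

definition ext_norm_topology :: "('v::ab_group_add \<Rightarrow> ennreal) \<Rightarrow> 'v topology" where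
  "ext_norm_topology N =
     topology (\<lambda>U. \<forall>x\<in>U. \<exists>e::real. e > 0 \<and> {y. N (y - x) < ennreal e} \<subseteq> U)"

definition ext_banach :: "('k::real_normed_field \<Rightarrow> 'v::ab_group_add \<Rightarrow> 'v) \<Rightarrow> ('v \<Rightarrow> ennreal) \<Rightarrow> bool" where
  "ext_banach sc N \<longleftrightarrow> ext_norm sc N \<and>
     (\<forall>s::nat \<Rightarrow> 'v.
        (\<forall>e::real. e > 0 \<longrightarrow> (\<exists>M. \<forall>m\<ge>M. \<forall>n\<ge>M. N (s m - s n) < ennreal e)) \<longrightarrow>
        (\<exists>x. \<forall>e::real. e > 0 \<longrightarrow> (\<exists>M. \<forall>n\<ge>M. N (s n - x) < ennreal e)))"

definition seminorm_on :: "('k::real_normed_field \<Rightarrow> 'v::ab_group_add \<Rightarrow> 'v) \<Rightarrow> ('v \<Rightarrow> real) \<Rightarrow> bool" where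
  "seminorm_on sc p \<longleftrightarrow>
     (\<forall>x. p x \<ge> 0) \<and> (\<forall>a x. p (sc a x) = norm a * p x) \<and> (\<forall>x y. p (x + y) \<le> p x + p y)"

definition seminorm_topology :: "('v::ab_group_add \<Rightarrow> real) set \<Rightarrow> 'v topology" where
  "seminorm_topology P =
     topology (\<lambda>U. \<forall>x\<in>U. \<exists>F e. finite F \<and> F \<subseteq> P \<and> e > 0 \<and>
                          {y. \<forall>p\<in>F. p (y - x) < e} \<subseteq> U)"

definition locally_convex_topology :: "('k::real_normed_field \<Rightarrow> 'v::ab_group_add \<Rightarrow> 'v) \<Rightarrow> 'v topology \<Rightarrow> bool" where
  "locally_convex_topology sc T \<longleftrightarrow>
     (\<exists>P. (\<forall>p\<in>P. seminorm_on sc p) \<and> T = seminorm_topology P)"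

definition coarser :: "'a topology \<Rightarrow> 'a topology \<Rightarrow> bool" where
  "coarser T1 T2 \<longleftrightarrow> (\<forall>U. openin T1 U \<longrightarrow> openin T2 U)"

definition finest_lc_topology :: "('k::real_normed_field \<Rightarrow> 'v::ab_group_add \<Rightarrow> 'v) \<Rightarrow> ('v \<Rightarrow> ennreal) \<Rightarrow> 'v topology \<Rightarrow> bool" where
  "finest_lc_topology sc N T \<longleftrightarrow>
     locally_convex_topology sc T \<and> coarser T (ext_norm_topology N) \<and>
     (\<forall>T'. locally_convex_topology sc T' \<and> coarser T' (ext_norm_topology N) \<longrightarrow> coarser T' T)"

definition absolutely_convex :: "('k::real_normed_field \<Rightarrow> 'v::ab_group_add \<Rightarrow> 'v) \<Rightarrow> 'v set \<Rightarrow> bool" where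
  "absolutely_convex sc B \<longleftrightarrow>
     (\<forall>x\<in>B. \<forall>y\<in>B. \<forall>a b. norm a + norm b \<le> 1 \<longrightarrow> sc a x + sc b y \<in> B)"

definition absorbing :: "('k::real_normed_field \<Rightarrow> 'v::ab_group_add \<Rightarrow> 'v) \<Rightarrow> 'v set \<Rightarrow> bool" where
  "absorbing sc B \<longleftrightarrow> (\<forall>x. \<exists>r::real. r > 0 \<and> (\<forall>a. r \<le> norm a \<longrightarrow> x \<in> sc a ` B))"

definition barreled :: "('k::real_normed_field \<Rightarrow> 'v::ab_group_add \<Rightarrow> 'v) \<Rightarrow> 'v topology \<Rightarrow> bool" where
  "barreled sc T \<longleftrightarrow>
     (\<forall>B. absolutely_convex sc B \<and> absorbing sc B \<and> closedin T B \<longrightarrow>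
          (\<exists>U. openin T U \<and> 0 \<in> U \<and> U \<subseteq> B))"

end

theory Submission
  imports Defs
begin

lemma openin_ENT:
  "openin (ext_norm_topology N) U \<longleftrightarrow> (\<forall>x\<in>U. \<exists>e::real. e > 0 \<and> {y. N (y - x) < ennreal e} \<subseteq> U)"
proof -
  have "istopology (\<lambda>U. \<forall>x\<in>U. \<exists>e::real. e > 0 \<and> {y. N (y - x) < ennreal e} \<subseteq> U)"
    unfolding istopology_def
  proof (intro conjI allI impI)
    fix S T assume S: "\<forall>x\<in>S. \<exists>e::real. e > 0 \<and> {y. N (y - x) < ennreal e} \<subseteq> S"
      and T: "\<forall>x\<in>T. \<exists>e::real. e > 0 \<and> {y. N (y - x) < ennreal e} \<subseteq> T"
    show "\<forall>x\<in>S \<inter> T. \<exists>e::real. e > 0 \<and> {y. N (y - x) < ennreal e} \<subseteq> S \<inter> T"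
    proof
      fix x assume "x \<in> S \<inter> T"
      then obtain e1 e2 :: real where "e1 > 0" "{y. N (y - x) < ennreal e1} \<subseteq> S"
        "e2 > 0" "{y. N (y - x) < ennreal e2} \<subseteq> T" using S T by blast
      moreover have "{y. N (y - x) < ennreal (min e1 e2)} \<subseteq> {y. N (y - x) < ennreal e1} \<inter> {y. N (y - x) < ennreal e2}"
      proof -
        have "ennreal (min e1 e2) \<le> ennreal e1" "ennreal (min e1 e2) \<le> ennreal e2"
          by (auto intro: ennreal_leI)
        then show ?thesis by (auto dest: order.strict_trans2)
      qed
      ultimately show "\<exists>e::real. e > 0 \<and> {y. N (y - x) < ennreal e} \<subseteq> S \<inter> T"
        by (intro exI[of _ "min e1 e2"]) auto
    qed
  next
    fix K assume H: "\<forall>S\<in>K. \<forall>x\<in>S. \<exists>e::real. e > 0 \<and> {y. N (y - x) < ennreal e} \<subseteq> S"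
    show "\<forall>x\<in>\<Union>K. \<exists>e::real. e > 0 \<and> {y. N (y - x) < ennreal e} \<subseteq> \<Union>K"
    proof
      fix x assume "x \<in> \<Union>K"
      then obtain S where S: "S \<in> K" "x \<in> S" by (rule UnionE)
      from bspec[OF bspec[OF H S(1)] S(2)] obtain e :: real where e: "e > 0" "{y. N (y - x) < ennreal e} \<subseteq> S"
        by (elim exE conjE)
      show "\<exists>e::real. e > 0 \<and> {y. N (y - x) < ennreal e} \<subseteq> \<Union>K"
        using e subset_trans[OF e(2) Union_upper[OF S(1)]] by (intro exI[of _ e]) simp
    qed
  qed
  then show ?thesis unfolding ext_norm_topology_def by (simp add: topology_inverse')
qed

lemma openin_ST:
  "openin (seminorm_topology P) U \<longleftrightarrow> (\<forall>x\<in>U. \<exists>F e. finite F \<and> F \<subseteq> P \<and> e > 0 \<and>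
                          {y. \<forall>p\<in>F. p (y - x) < e} \<subseteq> U)"
proof -
  have "istopology (\<lambda>U. \<forall>x\<in>U. \<exists>F e. finite F \<and> F \<subseteq> P \<and> e > 0 \<and>
                          {y. \<forall>p\<in>F. p (y - x) < e} \<subseteq> U)"
    unfolding istopology_def
  proof (intro conjI allI impI)
    fix S T assume S: "\<forall>x\<in>S. \<exists>F e. finite F \<and> F \<subseteq> P \<and> e > 0 \<and> {y. \<forall>p\<in>F. p (y - x) < e} \<subseteq> S"
      and T: "\<forall>x\<in>T. \<exists>F e. finite F \<and> F \<subseteq> P \<and> e > 0 \<and> {y. \<forall>p\<in>F. p (y - x) < e} \<subseteq> T"
    show "\<forall>x\<in>S \<inter> T. \<exists>F e. finite F \<and> F \<subseteq> P \<and> e > 0 \<and> {y. \<forall>p\<in>F. p (y - x) < e} \<subseteq> S \<inter> T"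
    proof
      fix x assume "x \<in> S \<inter> T"
      then have "x \<in> S" "x \<in> T" by auto
      obtain F1 e1 where 1: "finite F1" "F1 \<subseteq> P" "e1 > 0" "{y. \<forall>p\<in>F1. p (y - x) < e1} \<subseteq> S"
        using bspec[OF S \<open>x \<in> S\<close>] by (elim exE conjE)
      obtain F2 e2 where 2: "finite F2" "F2 \<subseteq> P" "e2 > 0" "{y. \<forall>p\<in>F2. p (y - x) < e2} \<subseteq> T"
        using bspec[OF T \<open>x \<in> T\<close>] by (elim exE conjE)
      have "{y. \<forall>p\<in>F1 \<union> F2. p (y - x) < min e1 e2} \<subseteq> S \<inter> T"
        using 1(4) 2(4) by fastforce
      then show "\<exists>F e. finite F \<and> F \<subseteq> P \<and> e > 0 \<and> {y. \<forall>p\<in>F. p (y - x) < e} \<subseteq> S \<inter> T"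
        using 1 2 by (intro exI[of _ "F1 \<union> F2"] exI[of _ "min e1 e2"]) auto
    qed
  next
    fix K assume H: "\<forall>S\<in>K. \<forall>x\<in>S. \<exists>F e. finite F \<and> F \<subseteq> P \<and> e > 0 \<and> {y. \<forall>p\<in>F. p (y - x) < e} \<subseteq> S"
    show "\<forall>x\<in>\<Union>K. \<exists>F e. finite F \<and> F \<subseteq> P \<and> e > 0 \<and> {y. \<forall>p\<in>F. p (y - x) < e} \<subseteq> \<Union>K"
    proof
      fix x assume "x \<in> \<Union>K"
      then obtain S where S: "S \<in> K" "x \<in> S" by (rule UnionE)
      from bspec[OF bspec[OF H S(1)] S(2)] obtain F e where e: "finite F" "F \<subseteq> P" "e > 0" "{y. \<forall>p\<in>F. p (y - x) < e} \<subseteq> S"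
        by (elim exE conjE)
      show "\<exists>F e. finite F \<and> F \<subseteq> P \<and> e > 0 \<and> {y. \<forall>p\<in>F. p (y - x) < e} \<subseteq> \<Union>K"
        using e subset_trans[OF e(4) Union_upper[OF S(1)]] by (intro exI[of _ F] exI[of _ e]) simp
    qed
  qed
  then show ?thesis unfolding seminorm_topology_def by (simp add: topology_inverse')
qed

lemma topspace_ST: "topspace (seminorm_topology P) = UNIV"
proof -
  have "openin (seminorm_topology P) UNIV"
    unfolding openin_ST by (intro ballI exI[of _ "{}"] exI[of _ "1::real"]) auto
  then show ?thesis using openin_subset by blast
qed

lemma enn_less_iff: "a < top \<Longrightarrow> a < ennreal e \<longleftrightarrow> enn2real a < e"
  by simp


locale ebs = vector_space sc for sc :: "'k::real_normed_field \<Rightarrow> 'v::ab_group_add \<Rightarrow> 'v" +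
  fixes N :: "'v \<Rightarrow> ennreal"
  assumes eb: "ext_banach sc N"
begin

lemma N0: "N x = 0 \<longleftrightarrow> x = 0" and Nsc: "N (sc a x) = ennreal (norm a) * N x"
  and Ntri: "N (x + y) \<le> N x + N y"
  using eb unfolding ext_banach_def ext_norm_def by auto

lemma Ncauchy: "(\<forall>e::real. e > 0 \<longrightarrow> (\<exists>M::nat. \<forall>m\<ge>M. \<forall>n\<ge>M. N (s m - s n) < ennreal e)) \<Longrightarrow>
        (\<exists>x. \<forall>e::real. e > 0 \<longrightarrow> (\<exists>M. \<forall>n\<ge>M. N (s n - x) < ennreal e))"
  using eb unfolding ext_banach_def by blast

lemma Nminus: "N (- x) = N x"
  using Nsc[of "-1" x] by (simp add: scale_minus_left)

lemma Ncomm: "N (x - y) = N (y - x)"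
  by (metis Nminus minus_diff_eq)

lemma Nzero[simp]: "N 0 = 0" using N0 by simp

definition d where "d x y = enn2real (N (x - y))"
definition Xf where "Xf = {x. N x < top}"

lemma Xf_diff: "x \<in> Xf \<Longrightarrow> y \<in> Xf \<Longrightarrow> x - y \<in> Xf"
  unfolding Xf_def using Ntri[of x "-y"] Nminus[of y]
  by (metis (mono_tags, lifting) diff_conv_add_uminus ennreal_add_less_top mem_Collect_eq order_le_less_trans)

lemma Xf_add: "x \<in> Xf \<Longrightarrow> y \<in> Xf \<Longrightarrow> x + y \<in> Xf"
  unfolding Xf_def using Ntri[of x y]
  by (metis (mono_tags, lifting) ennreal_add_less_top mem_Collect_eq order_le_less_trans)

lemma Xf_sc: "x \<in> Xf \<Longrightarrow> sc a x \<in> Xf"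
  unfolding Xf_def using Nsc by (simp add: ennreal_mult_less_top)

lemma Xf_0[simp]: "0 \<in> Xf" unfolding Xf_def by simp

lemma d_sc: "enn2real (N (sc a x)) = norm a * enn2real (N x)"
  by (simp add: Nsc enn2real_mult)

lemma Metric: "Metric_space Xf d"
proof
  fix x y show "0 \<le> d x y" by (simp add: d_def)
  show "d x y = d y x" by (simp add: d_def Ncomm)
next
  fix x y assume "x \<in> Xf" "y \<in> Xf"
  then have "N (x - y) < top" using Xf_diff Xf_def by blast
  then show "d x y = 0 \<longleftrightarrow> x = y" unfolding d_def
    by (metis N0 enn2real_eq_0_iff eq_iff_diff_eq_0 less_irrefl)
next
  fix x y z assume xyz: "x \<in> Xf" "y \<in> Xf" "z \<in> Xf"
  then have f: "N (x - y) < top" "N (y - z) < top" using Xf_diff Xf_def by blast+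
  have "N (x - z) \<le> N (x - y) + N (y - z)" using Ntri[of "x - y" "y - z"] by simp
  then show "d x z \<le> d x y + d y z" unfolding d_def using f
    by (metis enn2real_mono enn2real_plus ennreal_add_less_top)
qed

end

context ebs begin

sublocale M: Metric_space Xf d by (rule Metric)

lemma dless: "x \<in> Xf \<Longrightarrow> y \<in> Xf \<Longrightarrow> N (x - y) < ennreal e \<longleftrightarrow> d x y < e"
  unfolding d_def using Xf_diff Xf_def enn_less_iff by blast

lemma mcomplete: "M.mcomplete"
  unfolding M.mcomplete_def M.MCauchy_def M.limit_metric_sequentially
proof (intro allI impI)
  fix s :: "nat \<Rightarrow> 'v" assume H: "range s \<subseteq> Xf \<and> (\<forall>\<epsilon>>0. \<exists>N. \<forall>n n'. N \<le> n \<longrightarrow> N \<le> n' \<longrightarrow> d (s n) (s n') < \<epsilon>)"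
  then have sX: "\<And>n. s n \<in> Xf" by auto
  have "\<forall>e::real. e > 0 \<longrightarrow> (\<exists>M::nat. \<forall>m\<ge>M. \<forall>n\<ge>M. N (s m - s n) < ennreal e)"
  proof (intro allI impI)
    fix e :: real assume "e > 0"
    then obtain M where M: "\<forall>n n'. M \<le> n \<longrightarrow> M \<le> n' \<longrightarrow> d (s n) (s n') < e" using H by blast
    show "\<exists>M::nat. \<forall>m\<ge>M. \<forall>n\<ge>M. N (s m - s n) < ennreal e"
      using M dless[OF sX sX] by (intro exI[of _ M]) simp
  qed
  then obtain x where x: "\<forall>e::real. e > 0 \<longrightarrow> (\<exists>M. \<forall>n\<ge>M. N (s n - x) < ennreal e)"
    using Ncauchy by blast
  obtain M0 where "\<forall>n\<ge>M0. N (s n - x) < ennreal 1" using x[rule_format, OF zero_less_one] by (elim exE)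
  then have "N (s M0 - x) < ennreal 1" by simp
  then have "s M0 - x \<in> Xf" unfolding Xf_def using ennreal_less_top order.strict_trans by blast
  from Xf_diff[OF sX[of M0] this] have xX: "x \<in> Xf" by simp
  show "\<exists>l. l \<in> Xf \<and> (\<forall>\<epsilon>>0. \<exists>N. \<forall>n\<ge>N. s n \<in> Xf \<and> d (s n) l < \<epsilon>)"
  proof (intro exI[of _ x] conjI xX allI impI)
    fix e :: real assume "e > 0"
    then obtain M where M: "\<forall>n\<ge>M. N (s n - x) < ennreal e" using x by blast
    show "\<exists>N. \<forall>n\<ge>N. s n \<in> Xf \<and> d (s n) x < e"
      using M sX dless[OF sX xX] by (intro exI[of _ M]) simp
  qed
qed

lemma closed_C:
  assumes hB: "\<forall>x\<in>-B. \<exists>e::real. e > 0 \<and> {y. N (y - x) < ennreal e} \<subseteq> -B"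
    and c: "c \<noteq> 0"
  shows "closedin M.mtopology {x\<in>Xf. sc c x \<in> B}"
  unfolding M.closedin_metric
proof (intro conjI allI impI)
  show "{x \<in> Xf. sc c x \<in> B} \<subseteq> Xf" by auto
  fix x assume "x \<in> Xf - {x \<in> Xf. sc c x \<in> B}"
  then have xX: "x \<in> Xf" and xB: "sc c x \<notin> B" by auto
  then obtain e :: real where e: "e > 0" "{y. N (y - sc c x) < ennreal e} \<subseteq> -B" using hB by blast
  show "\<exists>r>0. disjnt {x \<in> Xf. sc c x \<in> B} (M.mball x r)"
  proof (intro exI[of _ "e / norm c"] conjI)
    show "e / norm c > 0" using e c by simp
    show "disjnt {x \<in> Xf. sc c x \<in> B} (M.mball x (e / norm c))"
      unfolding disjnt_def
    proof (rule ccontr)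
      assume "{x \<in> Xf. sc c x \<in> B} \<inter> M.mball x (e / norm c) \<noteq> {}"
      then obtain y where y: "y \<in> Xf" "sc c y \<in> B" "d x y < e / norm c" by auto
      have "d (sc c y) (sc c x) = norm c * d y x"
        unfolding d_def by (metis d_sc scale_right_diff_distrib)
      also have "\<dots> < e" using y(3) c M.commute by (simp add: field_simps)
      finally have "N (sc c y - sc c x) < ennreal e"
        using dless Xf_sc xX y(1) by blast
      then show False using e(2) y(2) by auto
    qed
  qed
qed

end

context ebs begin

lemma baire_step:
  assumes hB: "\<forall>x\<in>-B. \<exists>e::real. e > 0 \<and> {y. N (y - x) < ennreal e} \<subseteq> -B"
    and ab: "absorbing sc B"
  shows "\<exists>n x0 \<delta>. \<delta> > 0 \<and> x0 \<in> Xf \<and> M.mball x0 \<delta> \<subseteq> {x\<in>Xf. sc (inverse (of_nat (Suc n))) x \<in> B}"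
proof (rule ccontr)
  define C where "C n = {x\<in>Xf. sc (inverse (of_nat (Suc n))) x \<in> B}" for n
  assume H: "\<not> ?thesis"
  have "M.mtopology interior_of \<Union>(range C) = {}"
  proof (rule M.metric_Baire_category_alt[OF mcomplete])
    show "countable (range C)" by simp
    fix T assume "T \<in> range C"
    then obtain n where T: "T = C n" by auto
    have "closedin M.mtopology T" unfolding T C_def
    proof (rule closed_C[OF hB])
      have "of_nat (Suc n) \<noteq> (0::'k)" by (simp only: of_nat_eq_0_iff)
      then show "inverse (of_nat (Suc n)) \<noteq> (0::'k)" by simp
    qed
    moreover have "M.mtopology interior_of T = {}"
    proof (rule ccontr)
      assume "M.mtopology interior_of T \<noteq> {}"
      then obtain x U where "openin M.mtopology U" "x \<in> U" "U \<subseteq> T"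
        unfolding interior_of_def by blast
      then obtain r where "r > 0" "M.mball x r \<subseteq> T" unfolding M.openin_mtopology by blast
      moreover have "x \<in> Xf" using \<open>x \<in> U\<close> \<open>U \<subseteq> T\<close> T C_def by blast
      ultimately show False using H T C_def by blast
    qed
    ultimately show "closedin M.mtopology T \<and> M.mtopology interior_of T = {}" by blast
  qed
  moreover have "\<Union>(range C) = Xf"
  proof
    show "\<Union>(range C) \<subseteq> Xf" unfolding C_def by auto
    show "Xf \<subseteq> \<Union>(range C)"
    proof
      fix x assume xX: "x \<in> Xf"
      obtain r :: real where r: "r > 0" "\<forall>a. r \<le> norm a \<longrightarrow> x \<in> sc a ` B"
        using ab unfolding absorbing_def by blast
      obtain n :: nat where n: "r \<le> real n" using real_arch_simple by blast
      have "r \<le> norm (of_nat (Suc n) :: 'k)" using n by (simp del: of_nat_Suc)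
      then obtain b where b: "b \<in> B" "x = sc (of_nat (Suc n)) b" using r by blast
      have "sc (inverse (of_nat (Suc n))) x = b"
        using b(2) by (simp del: of_nat_Suc)
      then show "x \<in> \<Union>(range C)" using xX b(1) unfolding C_def by auto
    qed
  qed
  ultimately have "M.mtopology interior_of Xf = {}" by simp
  then show False using interior_of_topspace[of M.mtopology] M.topspace_mtopology Xf_0 by simp
qed

end

context ebs begin

lemma ball_in_B:
  assumes hB: "\<forall>x\<in>-B. \<exists>e::real. e > 0 \<and> {y. N (y - x) < ennreal e} \<subseteq> -B"
    and ac: "absolutely_convex sc B" and ab: "absorbing sc B"
  shows "\<exists>r::real. r > 0 \<and> {w. N w < ennreal r} \<subseteq> B"
proof -
  obtain n x0 \<delta> where nx: "\<delta> > 0" "x0 \<in> Xf" "M.mball x0 \<delta> \<subseteq> {x\<in>Xf. sc (inverse (of_nat (Suc n))) x \<in> B}"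
    using baire_step[OF hB ab] by blast
  define m :: 'k where "m = of_nat (Suc n)"
  define c where "c = inverse m"
  have m0: "m \<noteq> 0" unfolding m_def by (simp only: of_nat_eq_0_iff)
  have nm: "norm m = real (Suc n)" unfolding m_def by (simp only: norm_of_nat)
  show ?thesis
  proof (intro exI[of _ "\<delta> / real (Suc n)"] conjI subsetI)
    show "\<delta> / real (Suc n) > 0" using nx by simp
    fix w assume "w \<in> {w. N w < ennreal (\<delta> / real (Suc n))}"
    then have wN: "N w < ennreal (\<delta> / real (Suc n))" by simp
    then have wX: "w \<in> Xf" unfolding Xf_def using ennreal_less_top order.strict_trans by blast
    have dw: "enn2real (N w) < \<delta> / real (Suc n)" using wN enn_less_iff wX Xf_def by blast
    define v where "v = sc m w"
    have vX: "v \<in> Xf" unfolding v_def using Xf_sc wX by blast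
    have "enn2real (N v) = real (Suc n) * enn2real (N w)" unfolding v_def d_sc nm ..
    also have "\<dots> < \<delta>" using dw by (simp add: field_simps)
    finally have dv: "enn2real (N v) < \<delta>" .
    have "x0 + v \<in> M.mball x0 \<delta>"
      using nx(2) vX dv Xf_add by (simp add: d_def Nminus)
    then have 1: "sc c (x0 + v) \<in> B" using nx(3) unfolding c_def m_def by blast
    have "x0 - v \<in> M.mball x0 \<delta>"
      using nx(2) vX dv Xf_diff by (simp add: d_def Nminus)
    then have 2: "sc c (x0 - v) \<in> B" using nx(3) unfolding c_def m_def by blast
    have "norm (1/2 :: 'k) + norm (-1/2 :: 'k) \<le> 1" by (simp add: norm_divide)
    then have "sc (1/2) (sc c (x0 + v)) + sc (-1/2) (sc c (x0 - v)) \<in> B"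
      using ac 1 2 unfolding absolutely_convex_def by blast
    moreover have "sc (1/2) (sc c (x0 + v)) + sc (-1/2) (sc c (x0 - v)) = sc c v"
    proof -
      have "sc (1/2) (sc c (x0 + v)) + sc (-1/2) (sc c (x0 - v))
          = sc (c/2) x0 + sc (c/2) v + (- sc (c/2) x0 + sc (c/2) v)"
        by (simp add: scale_right_distrib scale_right_diff_distrib scale_minus_left)
      also have "\<dots> = sc (c/2) v + sc (c/2) v" by simp
      also have "\<dots> = sc c v" by (simp add: scale_left_distrib[symmetric])
      finally show ?thesis .
    qed
    moreover have "sc c v = w" unfolding c_def v_def using m0 by simp
    ultimately show "w \<in> B" by simp
  qed
qed

end

context ebs begin

definition mk :: "'v set \<Rightarrow> 'v \<Rightarrow> real" where
  "mk B x = Inf {t. t > 0 \<and> x \<in> sc (of_real t) ` B}"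

context
  fixes B assumes ac: "absolutely_convex sc B" and ab: "absorbing sc B"
begin

lemma Bne: "\<exists>b. b \<in> B"
proof -
  obtain r :: real where "r > 0" "\<forall>a. r \<le> norm a \<longrightarrow> (0::'v) \<in> sc a ` B"
    using ab unfolding absorbing_def by blast
  then have "(0::'v) \<in> sc (of_real r) ` B" by simp
  then show ?thesis by blast
qed

lemma bal: "b \<in> B \<Longrightarrow> norm u \<le> 1 \<Longrightarrow> sc u b \<in> B"
  using ac unfolding absolutely_convex_def
  by (metis add.right_neutral norm_zero scale_zero_left)

lemma zeroB: "0 \<in> B"
  using Bne bal[of _ 0] by auto

lemma Sne: "\<exists>t. t > 0 \<and> x \<in> sc (of_real t) ` B"
proof -
  obtain r :: real where "r > 0" "\<forall>a. r \<le> norm a \<longrightarrow> x \<in> sc a ` B"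
    using ab unfolding absorbing_def by blast
  then show ?thesis by (intro exI[of _ r]) simp
qed

lemma bdd: "bdd_below {t. t > 0 \<and> x \<in> sc (of_real t) ` B}"
  by (rule bdd_belowI[of _ 0]) simp

lemma mk_nonneg: "mk B x \<ge> 0"
  unfolding mk_def using Sne[of x] by (intro cInf_greatest) auto

lemma mk_le: "t > 0 \<Longrightarrow> x \<in> sc (of_real t) ` B \<Longrightarrow> mk B x \<le> t"
  unfolding mk_def by (rule cInf_lower[OF _ bdd]) simp

lemma mk_lt1: assumes "mk B x < 1" shows "x \<in> B"
proof -
  have "{t. t > 0 \<and> x \<in> sc (of_real t) ` B} \<noteq> {}" using Sne by blast
  from cInf_lessD[OF this assms[unfolded mk_def]] obtain t where
    t: "t > 0" "x \<in> sc (of_real t) ` B" "t < 1" by blast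
  then obtain b where "b \<in> B" "x = sc (of_real t) b" by blast
  then show ?thesis using bal[of b "of_real t"] t by simp
qed

lemma mk_zero: "mk B 0 = 0"
proof -
  have "mk B 0 \<le> t" if "t > 0" for t
    using that zeroB by (intro mk_le) (auto intro!: image_eqI[of _ _ 0])
  then have "mk B 0 \<le> 0"
    by (metis field_sum_of_halves half_gt_zero leD leI mk_nonneg add_le_same_cancel1)
  then show ?thesis using mk_nonneg[of 0] by simp
qed

lemma mk_sc_le: assumes "a \<noteq> 0" shows "mk B (sc a x) \<le> norm a * mk B x"
proof -
  have "mk B (sc a x) / norm a \<le> t" if t: "t > 0 \<and> x \<in> sc (of_real t) ` B" for t
  proof -
    obtain b where b: "b \<in> B" "x = sc (of_real t) b" using t by blast
    define u where "u = a / of_real (norm a)"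
    have nu: "norm u = 1" unfolding u_def using assms by (simp add: norm_divide)
    have eq: "a * of_real t = of_real (norm a * t) * u" unfolding u_def using assms
      by (simp add: field_simps)
    have "sc a x = sc (a * of_real t) b" using b(2) by simp
    also have "\<dots> = sc (of_real (norm a * t)) (sc u b)" by (simp only: eq scale_scale)
    finally have e2: "sc a x = sc (of_real (norm a * t)) (sc u b)" .
    have "sc u b \<in> B" using bal[OF b(1)] nu by simp
    then have mem: "sc a x \<in> sc (of_real (norm a * t)) ` B" by (subst e2) (rule imageI)
    have "mk B (sc a x) \<le> norm a * t"
      using assms t by (intro mk_le[OF _ mem]) simp
    then show ?thesis using assms by (simp add: field_simps)
  qed
  then have "mk B (sc a x) / norm a \<le> mk B x"
    unfolding mk_def[of B x] using Sne[of x] by (intro cInf_greatest) auto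
  then show ?thesis using assms by (simp add: field_simps)
qed

lemma mk_sc: "mk B (sc a x) = norm a * mk B x"
proof (cases "a = 0")
  case True then show ?thesis by (simp add: mk_zero)
next
  case False
  have "mk B x = mk B (sc (inverse a) (sc a x))" using False by simp
  also have "\<dots> \<le> norm (inverse a) * mk B (sc a x)" using False by (intro mk_sc_le) simp
  finally have "norm a * mk B x \<le> norm a * (norm (inverse a) * mk B (sc a x))"
    by (rule mult_left_mono) simp
  also have "norm a * (norm (inverse a) * mk B (sc a x)) = mk B (sc a x)"
    using False by (simp add: norm_inverse mult.assoc[symmetric])
  finally have "norm a * mk B x \<le> mk B (sc a x)" .
  then show ?thesis using mk_sc_le[OF False, of x] by simp
qed

lemma mk_add2: assumes s: "s > 0" "x \<in> sc (of_real s) ` B" and t: "t > 0" "y \<in> sc (of_real t) ` B"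
  shows "mk B (x + y) \<le> s + t"
proof -
  obtain b1 where b1: "b1 \<in> B" "x = sc (of_real s) b1" using s by blast
  obtain b2 where b2: "b2 \<in> B" "y = sc (of_real t) b2" using t by blast
  define b where "b = sc (of_real (s / (s + t))) b1 + sc (of_real (t / (s + t))) b2"
  have "norm (of_real (s / (s + t)) :: 'k) + norm (of_real (t / (s + t)) :: 'k) \<le> 1"
    unfolding norm_of_real using s t by (simp add: field_simps)
  then have bB: "b \<in> B" using ac b1 b2 unfolding absolutely_convex_def b_def by blast
  have "sc (of_real (s + t)) b = sc (of_real ((s + t) * (s / (s + t)))) b1 + sc (of_real ((s + t) * (t / (s + t)))) b2"
    by (simp only: b_def scale_right_distrib scale_scale of_real_mult)
  also have "\<dots> = x + y"
  proof -
    have h1: "(s + t) * (s / (s + t)) = s" and h2: "(s + t) * (t / (s + t)) = t" using s t by simp_all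
    show ?thesis unfolding h1 h2 using b1 b2 by simp
  qed
  finally have e: "sc (of_real (s + t)) b = x + y" .
  have mem: "x + y \<in> sc (of_real (s + t)) ` B" unfolding e[symmetric] by (rule imageI[OF bB])
  show ?thesis using s t by (intro mk_le[OF _ mem]) simp
qed

lemma mk_add: "mk B (x + y) \<le> mk B x + mk B y"
proof -
  have "mk B (x + y) - t \<le> mk B x" if t: "t > 0 \<and> y \<in> sc (of_real t) ` B" for t
  proof -
    have "mk B (x + y) - t \<le> s" if s: "s > 0 \<and> x \<in> sc (of_real s) ` B" for s
      using mk_add2[of s x t y] s t by simp
    then show ?thesis unfolding mk_def[of B x] using Sne[of x] by (intro cInf_greatest) auto
  qed
  then have "mk B (x + y) - mk B x \<le> t" if "t > 0 \<and> y \<in> sc (of_real t) ` B" for t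
    using that by force
  then have "mk B (x + y) - mk B x \<le> mk B y"
    unfolding mk_def[of B y] using Sne[of y] by (intro cInf_greatest) auto
  then show ?thesis by simp
qed

lemma mk_seminorm: "seminorm_on sc (mk B)"
  unfolding seminorm_on_def using mk_nonneg mk_sc mk_add by blast

end

end

context ebs begin

lemma ball_mk:
  assumes ac: "absolutely_convex sc B" and ab: "absorbing sc B"
    and r: "r > 0" "{w. N w < ennreal r} \<subseteq> B" and t: "t > 0" and z: "N z < ennreal (r * t)"
  shows "mk B z \<le> t"
proof -
  have zX: "z \<in> Xf" unfolding Xf_def using z ennreal_less_top order.strict_trans by blast
  have dz: "enn2real (N z) < r * t" using z enn_less_iff zX Xf_def by blast
  define w where "w = sc (of_real (inverse t)) z"
  have wX: "w \<in> Xf" unfolding w_def using Xf_sc zX by blast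
  have "enn2real (N w) = inverse t * enn2real (N z)" unfolding w_def d_sc norm_of_real using t by simp
  also have "\<dots> < r" using dz t by (simp add: field_simps)
  finally have "N w < ennreal r" using enn_less_iff wX Xf_def by blast
  then have wB: "w \<in> B" using r by blast
  have "sc (of_real t) w = z" unfolding w_def using t by (simp add: of_real_inverse)
  then have "z \<in> sc (of_real t) ` B" using wB by blast
  then show ?thesis by (rule mk_le[OF ac ab t])
qed

lemma barreled: assumes fin: "finest_lc_topology sc N T" shows "barreled sc T"
  unfolding barreled_def
proof (intro allI impI)
  fix B assume "absolutely_convex sc B \<and> absorbing sc B \<and> closedin T B"
  then have ac: "absolutely_convex sc B" and ab: "absorbing sc B" and cl: "closedin T B" by auto
  obtain P where P: "T = seminorm_topology P"
    using fin unfolding finest_lc_topology_def locally_convex_topology_def by blast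
  have "openin T (-B)" using cl unfolding closedin_def P topspace_ST by (simp add: Compl_eq_Diff_UNIV)
  then have "openin (ext_norm_topology N) (-B)"
    using fin unfolding finest_lc_topology_def coarser_def by blast
  then have hB: "\<forall>x\<in>-B. \<exists>e::real. e > 0 \<and> {y. N (y - x) < ennreal e} \<subseteq> -B"
    unfolding openin_ENT .
  obtain r :: real where r: "r > 0" "{w. N w < ennreal r} \<subseteq> B"
    using ball_in_B[OF hB ac ab] by blast
  let ?p = "mk B"
  let ?T' = "seminorm_topology {?p}"
  have lc: "locally_convex_topology sc ?T'"
    unfolding locally_convex_topology_def using mk_seminorm[OF ac ab] by blast
  have co: "coarser ?T' (ext_norm_topology N)"
    unfolding coarser_def openin_ENT openin_ST
  proof (intro allI impI ballI)
    fix U x assume H: "\<forall>x\<in>U. \<exists>F e. finite F \<and> F \<subseteq> {?p} \<and> e > 0 \<and> {y. \<forall>p\<in>F. p (y - x) < e} \<subseteq> U"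
      and x: "x \<in> U"
    obtain F e where F: "finite F" "F \<subseteq> {?p}" "e > 0" "{y. \<forall>p\<in>F. p (y - x) < e} \<subseteq> U"
      using bspec[OF H x] by (elim exE conjE)
    show "\<exists>e::real. e > 0 \<and> {y. N (y - x) < ennreal e} \<subseteq> U"
    proof (intro exI[of _ "r * (e/2)"] conjI subsetI)
      show "r * (e/2) > 0" using r F by simp
      fix y assume "y \<in> {y. N (y - x) < ennreal (r * (e / 2))}"
      then have "mk B (y - x) \<le> e/2" using ball_mk[OF ac ab r, of "e/2"] F by simp
      then have "\<forall>p\<in>F. p (y - x) < e" using F by auto
      then show "y \<in> U" using F by blast
    qed
  qed
  have "coarser ?T' T" using fin lc co unfolding finest_lc_topology_def by blast
  moreover have "openin ?T' {x. ?p x < 1}"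
    unfolding openin_ST
  proof (intro ballI)
    fix x assume x: "x \<in> {x. ?p x < 1}"
    show "\<exists>F e. finite F \<and> F \<subseteq> {?p} \<and> e > 0 \<and> {y. \<forall>p\<in>F. p (y - x) < e} \<subseteq> {x. ?p x < 1}"
    proof (intro exI[of _ "{?p}"] exI[of _ "1 - ?p x"] conjI subsetI)
      show "1 - ?p x > 0" using x by simp
      fix y assume "y \<in> {y. \<forall>p\<in>{?p}. p (y - x) < 1 - ?p x}"
      then have "?p (y - x) < 1 - ?p x" by simp
      moreover have "?p y \<le> ?p (y - x) + ?p x" using mk_add[OF ac ab, of "y - x" x] by simp
      ultimately show "y \<in> {x. ?p x < 1}" by simp
    qed auto
  qed
  ultimately have "openin T {x. ?p x < 1}" unfolding coarser_def by blast
  moreover have "0 \<in> {x. ?p x < 1}" using mk_zero[OF ac ab] by simp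
  moreover have "{x. ?p x < 1} \<subseteq> B" using mk_lt1[OF ac ab] by blast
  ultimately show "\<exists>U. openin T U \<and> 0 \<in> U \<and> U \<subseteq> B" by blast
qed

end

lemma barreled_gen:
  fixes sc :: "'k::real_normed_field \<Rightarrow> 'v::ab_group_add \<Rightarrow> 'v"
  assumes "vector_space sc" "ext_banach sc N" "finest_lc_topology sc N T"
  shows "barreled sc T"
proof -
  interpret ebs sc N using assms(1,2) by (simp add: ebs_def ebs_axioms_def)
  show ?thesis by (rule barreled[OF assms(3)])
qed

theorem theorem5p18:
  fixes scR :: "real \<Rightarrow> 'a::ab_group_add \<Rightarrow> 'a" and N :: "'a \<Rightarrow> ennreal" and T :: "'a topology"
    and scC :: "complex \<Rightarrow> 'b::ab_group_add \<Rightarrow> 'b" and M :: "'b \<Rightarrow> ennreal" and S :: "'b topology"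
  shows "(vector_space scR \<and> ext_banach scR N \<and> finest_lc_topology scR N T \<longrightarrow> barreled scR T) \<and>
         (vector_space scC \<and> ext_banach scC M \<and> finest_lc_topology scC M S \<longrightarrow> barreled scC S)"
  using barreled_gen[of scR N T] barreled_gen[of scC M S] by blast

end
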